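(* Let $m>n$ be positive integers and let $\sigma$ be a shuffle whose last entry is $\sigma(m')=n$, and $\lambda=\zeta(\sigma)$ (so $\lambda_1=m$). Then: (a) $\zeta(\overline\sigma)=\overline\lambda$. (b) Let $\alpha=\epsilon_i-\delta_j$ and suppose $i$ immediately precedes $j'$ in the one-line notation of $\sigma$. Let $r_\alpha(\sigma)=(i,j')\sigma$ be the shuffle obtained by interchanging $i$ and $j'$ in the one-line notation. Then $\overline{r_\alpha(\sigma)}=r_{\nu\alpha}(\overline\sigma)$, where $r_{\nu\alpha}(\overline\sigma)=(i+1,j')\overline\sigma$ (with $i+1$ read as $1$ if $i=n$).
   Context: Let $I=\{1,\dots,n\}\cup\{1',\dots,m'\}$ and for a permutation $w$ of $I$ its one-line notation is $(w(1),\dots,w(n),w(1'),\dots,w(m'))$ (positions ordered $1<\dots<n<1'<\dots<m'$). A shuffle is a permutation $\sigma$ of $I$ whose one-line notation contains $1,\dots,n$ and $1',\dots,m'$ each as subsequences in increasing order. $\zeta(\sigma)$ is the partition obtained as follows: draw a lattice path in an $n\times m$ rectangle from the top-left to the bottom-right corner whose $k$-th unit step is down if the $k$-th entry of the one-line notation is unprimed and right otherwise; $\zeta(\sigma)$ is the Young diagram of boxes below the path (row $\epsilon_i$, counted from the top, has $\lambda_{n+1-i}$ boxes). For $\lambda_1=m$, $\overline\lambda=(\lambda_2,\dots,\lambda_n,0)$. Let $\nu^{-1}$ be the permutation of $I$ with $\nu^{-1}(k)=k+1$ for $k\in[n-1]$, $\nu^{-1}(n)=1$, fixing primed elements; for $\sigma$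 with last entry $n$, $\overline\sigma$ is the shuffle with one-line notation $(1,\nu^{-1}\sigma(1),\dots,\nu^{-1}\sigma(n),\nu^{-1}\sigma(1'),\dots,\nu^{-1}\sigma((m-1)'))$, i.e. $1$ followed by $\nu^{-1}$ applied to the first $m+n-1$ entries of $\sigma$. $\nu(\epsilon_i-\delta_j)=\epsilon_{i+1}-\delta_j$ (indices of $\epsilon$ mod $n$ in $\{1,\dots,n\}$). *)

theory Defs
  imports Main "HOL-Combinatorics.Permutations" "HOL-Combinatorics.Transposition"
begin

text \<open>Elements of I: U i stands for the unprimed i, P j for the primed j'.\<close>
datatype idx = U nat | P nat

definition Iset :: "nat \<Rightarrow> nat \<Rightarrow> idx set" where
  "Iset n m = U ` {1..n} \<union> P ` {1..m}"

definition positions :: "nat \<Rightarrow> nat \<Rightarrow> idx list" where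
  "positions n m = map U [1..<n+1] @ map P [1..<m+1]"

definition oneline :: "nat \<Rightarrow> nat \<Rightarrow> (idx \<Rightarrow> idx) \<Rightarrow> idx list" where
  "oneline n m w = map w (positions n m)"

definition of_oneline :: "nat \<Rightarrow> nat \<Rightarrow> idx list \<Rightarrow> idx \<Rightarrow> idx" where
  "of_oneline n m L x = (case x of
      U i \<Rightarrow> if 1 \<le> i \<and> i \<le> n then L ! (i - 1) else x
    | P j \<Rightarrow> if 1 \<le> j \<and> j \<le> m then L ! (n + j - 1) else x)"

definition is_shuffle :: "nat \<Rightarrow> nat \<Rightarrow> (idx \<Rightarrow> idx) \<Rightarrow> bool" where
  "is_shuffle n m s \<longleftrightarrow> s permutes Iset n m \<and>
     oneline n m s \<in> shuffles (map U [1..<n+1]) (map P [1..<m+1])"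

text \<open>Lattice path: rows c w lists, from the top row down, the number of boxes
  below the path in each row (= number of right steps taken before the
  corresponding down step).\<close>
fun path_rows :: "idx list \<Rightarrow> nat \<Rightarrow> nat list" where
  "path_rows [] c = []"
| "path_rows (U _ # w) c = c # path_rows w c"
| "path_rows (P _ # w) c = path_rows w (Suc c)"

text \<open>zeta returns the partition as the list [lambda_1, ..., lambda_n];
  row epsilon_i (from the top) has lambda_(n+1-i) boxes.\<close>
definition zeta :: "nat \<Rightarrow> nat \<Rightarrow> (idx \<Rightarrow> idx) \<Rightarrow> nat list" where
  "zeta n m s = rev (path_rows (oneline n m s) 0)"

definition lbar :: "nat list \<Rightarrow> nat list" where
  "lbar l = tl l @ [0]"

definition nuinv :: "nat \<Rightarrow> idx \<Rightarrow> idx" where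
  "nuinv n x = (case x of U k \<Rightarrow> if k = n then U 1 else if 1 \<le> k \<and> k < n then U (k + 1) else U k
                        | P j \<Rightarrow> P j)"

definition sbar :: "nat \<Rightarrow> nat \<Rightarrow> (idx \<Rightarrow> idx) \<Rightarrow> idx \<Rightarrow> idx" where
  "sbar n m s = of_oneline n m (U 1 # map (nuinv n) (butlast (oneline n m s)))"

definition imm_precedes :: "idx list \<Rightarrow> idx \<Rightarrow> idx \<Rightarrow> bool" where
  "imm_precedes w x y \<longleftrightarrow> (\<exists>p. Suc p < length w \<and> w ! p = x \<and> w ! Suc p = y)"

end

theory Submission
  imports Defs
begin

fun isP :: "idx \<Rightarrow> bool" where
  "isP (U _) = False" | "isP (P _) = True"

lemma path_rows_snoc:
  "path_rows (xs @ [U a]) c = path_rows xs c @ [c + length (filter isP xs)]"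
proof (induction xs arbitrary: c)
  case Nil thus ?case by simp
next
  case (Cons x xs) thus ?case by (cases x) auto
qed

lemma path_rows_nuinv: "path_rows (map (nuinv n) xs) c = path_rows xs c"
proof (induction xs arbitrary: c)
  case Nil thus ?case by simp
next
  case (Cons x xs) thus ?case by (cases x) (auto simp: nuinv_def)
qed

lemma length_positions[simp]: "length (positions n m) = n + m"
  by (simp add: positions_def)

lemma positions_nth:
  "k < n + m \<Longrightarrow> positions n m ! k = (if k < n then U (Suc k) else P (Suc (k - n)))"
  by (auto simp: positions_def nth_append)

lemma oneline_of_oneline:
  assumes "length K = n + m"
  shows "oneline n m (of_oneline n m K) = K"
  using assms
  by (intro nth_equalityI) (auto simp: oneline_def positions_nth of_oneline_def)

lemma of_oneline_out:
  "x \<notin> Iset n m \<Longrightarrow> of_oneline n m K x = x"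
  by (cases x) (auto simp: of_oneline_def Iset_def)

lemma of_oneline_in:
  assumes "k < n + m"
  shows "of_oneline n m K (positions n m ! k) = K ! k"
  using assms by (auto simp: of_oneline_def positions_nth)

lemma Iset_positions: "x \<in> Iset n m \<Longrightarrow> \<exists>k<n+m. x = positions n m ! k"
proof -
  assume "x \<in> Iset n m"
  then have "x \<in> set (positions n m)"
    by (auto simp: Iset_def positions_def)
  thus ?thesis by (metis in_set_conv_nth length_positions)
qed

lemma inj_nuinv: "0 < n \<Longrightarrow> inj (nuinv n)"
  by (rule injI) (auto simp: nuinv_def split: idx.splits if_splits)

lemma inj_comp_transpose:
  "inj f \<Longrightarrow> f (transpose a b x) = transpose (f a) (f b) (f x)"
  by (auto simp: transpose_def dest: injD)

theorem lemma3p5: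
  fixes n m :: nat and \<sigma> :: "idx \<Rightarrow> idx"
  assumes "0 < n" and "n < m"
    and "is_shuffle n m \<sigma>"
    and "\<sigma> (P m) = U n"
  shows "zeta n m (sbar n m \<sigma>) = lbar (zeta n m \<sigma>) \<and>
         (\<forall>i j. 1 \<le> i \<longrightarrow> i \<le> n \<longrightarrow> 1 \<le> j \<longrightarrow> j \<le> m \<longrightarrow>
           imm_precedes (oneline n m \<sigma>) (U i) (P j) \<longrightarrow>
           sbar n m (transpose (U i) (P j) \<circ> \<sigma>)
             = transpose (U (if i = n then 1 else i + 1)) (P j) \<circ> sbar n m \<sigma>)"
proof -
  define L where "L = oneline n m \<sigma>"
  have lenL: "length L = n + m" by (simp add: L_def oneline_def)
  have sh: "L \<in> shuffles (map U [1..<n+1]) (map P [1..<m+1])"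
    using assms(3) by (simp add: is_shuffle_def L_def)
  have distL: "distinct L"
    by (rule distinct_disjoint_shuffles[OF _ _ _ sh]) (auto simp: distinct_map inj_on_def)
  have lastpos: "positions n m ! (n + m - 1) = P m"
    using assms(1,2) by (simp add: positions_nth)
  have lastL: "L ! (n + m - 1) = U n"
    using assms(1,2,4) lastpos by (simp add: L_def oneline_def)
  have Lsplit: "L = butlast L @ [U n]"
    using lenL lastL assms(1)
    by (metis append_butlast_last_id last_conv_nth list.size(3) add_gr_0 diff_Suc_1 length_0_conv
        less_numeral_extra(3))
  have "filter isP L \<in> shuffles (filter isP (map U [1..<n+1])) (filter isP (map P [1..<m+1]))"
    using sh filter_shuffles by blast
  then have "length (filter isP L) = m"
    by (simp add: length_shuffles filter_map o_def)
  then have cntB: "length (filter isP (butlast L)) = m"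
    by (metis Lsplit filter_append filter.simps isP.simps(1) append_Nil2)
  define K where "K = U 1 # map (nuinv n) (butlast L)"
  have lenK: "length K = n + m" using lenL assms(1) by (simp add: K_def)
  have sbarK: "sbar n m \<sigma> = of_oneline n m K"
    by (simp add: sbar_def K_def L_def)
  have partA: "zeta n m (sbar n m \<sigma>) = lbar (zeta n m \<sigma>)"
  proof -
    have "zeta n m (sbar n m \<sigma>) = rev (path_rows K 0)"
      by (simp add: zeta_def sbarK oneline_of_oneline[OF lenK])
    also have "\<dots> = rev (path_rows (butlast L) 0) @ [0]"
      by (simp add: K_def path_rows_nuinv)
    also have "\<dots> = lbar (zeta n m \<sigma>)"
    proof -
      have "path_rows L 0 = path_rows (butlast L @ [U n]) 0"
        by (subst Lsplit[symmetric]) (rule refl)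
      then show ?thesis
        by (simp add: lbar_def zeta_def path_rows_snoc cntB flip: L_def)
    qed
    finally show ?thesis .
  qed
  have partB: "sbar n m (transpose (U i) (P j) \<circ> \<sigma>)
             = transpose (U (if i = n then 1 else i + 1)) (P j) \<circ> sbar n m \<sigma>"
    if i1: "1 \<le> i" and i2: "i \<le> n" and j1: "1 \<le> j" and j2: "j \<le> m"
      and ip: "imm_precedes (oneline n m \<sigma>) (U i) (P j)" for i j
  proof -
    define \<tau> where "\<tau> = transpose (U i) (P j)"
    define \<tau>' where "\<tau>' = transpose (U (if i = n then 1 else i + 1)) (P j)"
    obtain p where p: "Suc p < length L" "L ! p = U i" "L ! Suc p = P j"
      using ip by (auto simp: imm_precedes_def L_def)
    have "i \<noteq> n"
    proof
      assume "i = n"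
      then have "L ! p = L ! (n + m - 1)" using p lastL by simp
      moreover have "p \<noteq> n + m - 1" using p lenL by simp
      ultimately show False using distL p lenL nth_eq_iff_index_eq by fastforce
    qed
    have nuU: "nuinv n (U i) = U (if i = n then 1 else i + 1)"
      using i1 i2 by (simp add: nuinv_def)
    have nuP: "nuinv n (P j) = P j" by (simp add: nuinv_def)
    have comm: "nuinv n (\<tau> x) = \<tau>' (nuinv n x)" for x
      unfolding \<tau>_def \<tau>'_def
      by (subst inj_comp_transpose[OF inj_nuinv[OF assms(1)]]) (simp add: nuU nuP)
    have L': "oneline n m (\<tau> \<circ> \<sigma>) = map \<tau> L"
      by (simp add: oneline_def L_def)
    have t1: "\<tau>' (U 1) = U 1"
      using \<open>i \<noteq> n\<close> i1 by (simp add: \<tau>'_def transpose_def)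
    have K': "U 1 # map (nuinv n) (butlast (map \<tau> L)) = map \<tau>' K"
      using t1 by (simp add: K_def map_butlast o_def comm)
    have lhs: "sbar n m (\<tau> \<circ> \<sigma>) = of_oneline n m (map \<tau>' K)"
      unfolding sbar_def L' K' ..
    show ?thesis
      unfolding \<tau>_def[symmetric] \<tau>'_def[symmetric] lhs sbarK
    proof
      fix x
      show "of_oneline n m (map \<tau>' K) x = (\<tau>' \<circ> of_oneline n m K) x"
      proof (cases "x \<in> Iset n m")
        case True
        then obtain k where k: "k < n + m" "x = positions n m ! k"
          using Iset_positions by blast
        then show ?thesis using lenK by (simp add: of_oneline_in)
      next
        case False
        have "U (if i = n then 1 else i + 1) \<in> Iset n m" "P j \<in> Iset n m"
          using i1 i2 j1 j2 \<open>i \<noteq> n\<close> by (auto simp: Iset_def)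
        then have "x \<noteq> U (if i = n then 1 else i + 1)" "x \<noteq> P j" using False by auto
        then show ?thesis using False by (simp add: of_oneline_out \<tau>'_def)
      qed
    qed
  qed
  show ?thesis using partA partB by blast
qed

end
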